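(* Let $\mathcal{X}=\langle P,K,V\rangle$ be a polyhedral model, $x\in P$, and $\phi,\psi$ SLCS formulas. Then $\mathcal{X},x\models\gamma(\phi,\psi)$ if and only if there is a piecewise linear path $\pi:[0,1]\to P$ with $\pi(0)=x$, $\pi((0,1))\subseteq[\![\phi]\!]$ and $\pi(1)\in[\![\psi]\!]$.
   Context: A $d$-simplex $\sigma\subseteq\mathbb{R}^m$ is the convex hull of $d+1$ affinely independent points $v_0,\dots,v_d$ (its vertices); the simplexes spanned by subsets of the vertices (including the empty simplex) are its faces, and $\tau\preceq\sigma$ means $\tau$ is a face of $\sigma$. The relative interior of $\sigma$ is $\tilde\sigma=\{\sum_i\lambda_iv_i:\lambda_i\in(0,1],\sum_i\lambda_i=1\}$. A simplicial complex $K$ is a finite set of simplexes of $\mathbb{R}^m$ closed under taking faces and such that the intersection of any two of its simplexes is a face of both. Its polyhedron is $|K|=\bigcup K$, with the subspace topology of $\mathbb{R}^m$; $\mathcal{C}$ and $\mathcal{I}$ denote closure and interior in this space. The cells of $K$ are the sets $\tilde\sigma$ for nonempty $\sigma\in K$; they form a partition $\tilde K$ of $|K|$. A path in a space $P$ is a continuous $\pi:[0,1]\to P$; $\pi(S)=\{\pi(s):s\in S\}$. A path $\pi$ is piecewise linear if there are $r_0=0<r_1<\dots<r_k=1$ such that for every $i<k$ and $t\in[0,1]$: $\pi(tr_i+(1-t)r_{i+1})=t\pi(r_i)+(1-t)\pi(r_{i+1})$. Fix a finite set $AP$ of atomic propositions. A polyhedral model is $\mathcal{X}=\langle P,K,V\rangle$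 with $K$ a simplicial complex, $P=|K|$, and $V:AP\to\mathcal{P}(P)$ such that each $V(p)$ is a union of cells of $K$ ($K$ is then called coherent with the model). SLCS formulas: $\phi::=\top\mid p\mid\neg\phi\mid\phi\wedge\phi\mid\Box\phi\mid\gamma(\phi,\phi)$, $p\in AP$. Semantics at $x\in P$, with $[\![\phi]\!]=\{x\in P:\mathcal{X},x\models\phi\}$: $\top$ always holds; $x\models p$ iff $x\in V(p)$; Boolean connectives as usual; $x\models\Box\phi$ iff $x\in\mathcal{I}([\![\phi]\!])$; $x\models\gamma(\phi,\psi)$ iff there is a path $\pi$ in $P$ with $\pi(0)=x$, $\pi((0,1))\subseteq[\![\phi]\!]$ and $\pi(1)\in[\![\psi]\!]$. *)

theory Defs
  imports "HOL-Analysis.Analysis"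
begin

text \<open>Simplexes in a Euclidean space: convex hulls of finite affinely independent
  vertex sets (the empty set gives the empty simplex).\<close>

definition is_simplex :: "'a::euclidean_space set \<Rightarrow> bool" where
  "is_simplex \<sigma> \<longleftrightarrow> (\<exists>V. finite V \<and> \<not> affine_dependent V \<and> \<sigma> = convex hull V)"

definition face_of_simplex :: "'a::euclidean_space set \<Rightarrow> 'a set \<Rightarrow> bool" where
  "face_of_simplex \<tau> \<sigma> \<longleftrightarrow>
     (\<exists>V. finite V \<and> \<not> affine_dependent V \<and> \<sigma> = convex hull V \<and>
          (\<exists>W. W \<subseteq> V \<and> \<tau> = convex hull W))"

definition simplex_relint :: "'a::euclidean_space set \<Rightarrow> 'a set" where
  "simplex_relint \<sigma> = {x. \<exists>V. finite V \<and> \<not> affine_dependent V \<and> \<sigma> = convex hull V \<and>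
      (\<exists>l. (\<forall>v\<in>V. 0 < l v \<and> l v \<le> 1) \<and> sum l V = 1 \<and> x = (\<Sum>v\<in>V. l v *\<^sub>R v))}"

definition simplicial_complex :: "'a::euclidean_space set set \<Rightarrow> bool" where
  "simplicial_complex K \<longleftrightarrow>
     finite K \<and> (\<forall>\<sigma>\<in>K. is_simplex \<sigma>) \<and>
     (\<forall>\<sigma>\<in>K. \<forall>\<tau>. face_of_simplex \<tau> \<sigma> \<longrightarrow> \<tau> \<in> K) \<and>
     (\<forall>\<sigma>\<in>K. \<forall>\<tau>\<in>K. face_of_simplex (\<sigma> \<inter> \<tau>) \<sigma> \<and> face_of_simplex (\<sigma> \<inter> \<tau>) \<tau>)"

definition cells :: "'a::euclidean_space set set \<Rightarrow> 'a set set" where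
  "cells K = {simplex_relint \<sigma> | \<sigma>. \<sigma> \<in> K \<and> \<sigma> \<noteq> {}}"

definition polyhedral_model ::
  "'a::euclidean_space set \<Rightarrow> 'a set set \<Rightarrow> ('p::finite \<Rightarrow> 'a set) \<Rightarrow> bool" where
  "polyhedral_model P K V \<longleftrightarrow> simplicial_complex K \<and> P = \<Union>K \<and>
     (\<forall>p. \<exists>C. C \<subseteq> cells K \<and> V p = \<Union>C)"

datatype 'p slcs = Top | Atom 'p | Neg "'p slcs" | Conj "'p slcs" "'p slcs"
  | Box "'p slcs" | Gamma "'p slcs" "'p slcs"

definition path_in :: "'a::euclidean_space set \<Rightarrow> (real \<Rightarrow> 'a) \<Rightarrow> bool" where
  "path_in P \<pi> \<longleftrightarrow> path \<pi> \<and> path_image \<pi> \<subseteq> P"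

fun sem :: "'a::euclidean_space set \<Rightarrow> ('p \<Rightarrow> 'a set) \<Rightarrow> 'p slcs \<Rightarrow> 'a set" where
  "sem P V Top = P"
| "sem P V (Atom p) = P \<inter> V p"
| "sem P V (Neg \<phi>) = P - sem P V \<phi>"
| "sem P V (Conj \<phi> \<psi>) = sem P V \<phi> \<inter> sem P V \<psi>"
| "sem P V (Box \<phi>) = (top_of_set P) interior_of (sem P V \<phi>)"
| "sem P V (Gamma \<phi> \<psi>) = {x \<in> P. \<exists>\<pi>. path_in P \<pi> \<and> \<pi> 0 = x \<and>
      \<pi> ` {0<..<1} \<subseteq> sem P V \<phi> \<and> \<pi> 1 \<in> sem P V \<psi>}"

definition models :: "'a::euclidean_space set \<Rightarrow> 'a set set \<Rightarrow> ('p \<Rightarrow> 'a set) \<Rightarrow> 'a \<Rightarrow> 'p slcs \<Rightarrow> bool" where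
  "models P K V x \<phi> \<longleftrightarrow> x \<in> sem P V \<phi>"

definition piecewise_linear :: "(real \<Rightarrow> 'a::real_vector) \<Rightarrow> bool" where
  "piecewise_linear \<pi> \<longleftrightarrow> (\<exists>(r::nat \<Rightarrow> real) k. r 0 = 0 \<and> r k = 1 \<and> (\<forall>i<k. r i < r (Suc i)) \<and>
     (\<forall>i<k. \<forall>t\<in>{0..1}. \<pi> (t * r i + (1 - t) * r (Suc i)) = t *\<^sub>R \<pi> (r i) + (1 - t) *\<^sub>R \<pi> (r (Suc i))))"

end

theory Submission
  imports Defs
begin


lemma simplex_relint_eq:
  assumes "is_simplex \<sigma>" shows "simplex_relint \<sigma> = rel_interior \<sigma>"
proof
  show "simplex_relint \<sigma> \<subseteq> rel_interior \<sigma>"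
  proof
    fix x assume "x \<in> simplex_relint \<sigma>"
    then obtain V l where V: "finite V" "\<not> affine_dependent V" "\<sigma> = convex hull V"
      and l: "\<forall>v\<in>V. 0 < l v \<and> l v \<le> 1" "sum l V = 1" "x = (\<Sum>v\<in>V. l v *\<^sub>R v)"
      unfolding simplex_relint_def by blast
    show "x \<in> rel_interior \<sigma>" unfolding V(3) rel_interior_convex_hull_explicit[OF V(2)]
      using l by blast
  qed
next
  show "rel_interior \<sigma> \<subseteq> simplex_relint \<sigma>"
  proof
    fix x assume x: "x \<in> rel_interior \<sigma>"
    obtain V where V: "finite V" "\<not> affine_dependent V" "\<sigma> = convex hull V"
      using assms unfolding is_simplex_def by blast
    then obtain u where u: "\<forall>v\<in>V. 0 < u v" "sum u V = 1" "(\<Sum>v\<in>V. u v *\<^sub>R v) = x"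
      using x rel_interior_convex_hull_explicit[OF V(2)] by auto
    have "\<forall>v\<in>V. u v \<le> 1"
    proof
      fix v assume "v \<in> V"
      then have "u v \<le> sum u V" using u(1) V(1)
        by (intro member_le_sum) (auto intro: less_imp_le)
      then show "u v \<le> 1" using u(2) by simp
    qed
    then show "x \<in> simplex_relint \<sigma>" unfolding simplex_relint_def
      using V u by blast
  qed
qed

locale cx =
  fixes K :: "'a::euclidean_space set set"
  assumes sc: "simplicial_complex K"
begin

lemma finK: "finite K" using sc unfolding simplicial_complex_def by blast

lemma K_simplex: "\<sigma> \<in> K \<Longrightarrow> is_simplex \<sigma>"
  using sc unfolding simplicial_complex_def by blast

lemma K_hull: assumes "\<sigma> \<in> K"
  obtains V where "finite V" "\<not> affine_dependent V" "\<sigma> = convex hull V"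
  using K_simplex[OF assms] unfolding is_simplex_def by blast

lemma K_compact: "\<sigma> \<in> K \<Longrightarrow> compact \<sigma>"
  by (metis K_hull compact_convex_hull finite_imp_compact)

lemma K_closed: "\<sigma> \<in> K \<Longrightarrow> closed \<sigma>"
  using K_compact compact_imp_closed by blast

lemma K_convex: "\<sigma> \<in> K \<Longrightarrow> convex \<sigma>"
  by (metis K_hull convex_convex_hull)

lemma K_face: assumes "\<sigma> \<in> K" "T face_of \<sigma>" shows "T \<in> K"
proof -
  obtain V where V: "finite V" "\<not> affine_dependent V" "\<sigma> = convex hull V"
    using K_hull[OF assms(1)] by blast
  then obtain W where "W \<subseteq> V" "T = convex hull W"
    using assms(2) face_of_convex_hull_affine_independent[OF V(2)] by blast
  then have "face_of_simplex T \<sigma>" unfolding face_of_simplex_def using V by blast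
  then show ?thesis using sc assms(1) unfolding simplicial_complex_def by blast
qed

lemma K_inter_face: assumes "\<sigma> \<in> K" "\<tau> \<in> K" shows "(\<sigma> \<inter> \<tau>) face_of \<sigma>"
proof -
  have "face_of_simplex (\<sigma> \<inter> \<tau>) \<sigma>" using sc assms unfolding simplicial_complex_def by blast
  then obtain V W where V: "finite V" "\<not> affine_dependent V" "\<sigma> = convex hull V"
    and W: "W \<subseteq> V" "\<sigma> \<inter> \<tau> = convex hull W" unfolding face_of_simplex_def by blast
  then show ?thesis using face_of_convex_hull_affine_independent[OF V(2)] by metis
qed

lemma cells_eq: "cells K = {rel_interior \<sigma> | \<sigma>. \<sigma> \<in> K \<and> \<sigma> \<noteq> {}}"
  unfolding cells_def using simplex_relint_eq K_simplex by metis

lemma ri_sub_K: "\<sigma> \<in> K \<Longrightarrow> rel_interior \<sigma> \<subseteq> \<Union>K"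
  using rel_interior_subset by blast

lemma cover: assumes "\<sigma> \<in> K" "y \<in> \<sigma>"
  shows "\<exists>\<rho>\<in>K. \<rho> \<noteq> {} \<and> \<rho> \<subseteq> \<sigma> \<and> y \<in> rel_interior \<rho>"
proof -
  obtain V where V: "finite V" "\<not> affine_dependent V" "\<sigma> = convex hull V"
    using K_hull[OF assms(1)] by blast
  then obtain u where u: "\<forall>v\<in>V. 0 \<le> u v" "sum u V = 1" "(\<Sum>v\<in>V. u v *\<^sub>R v) = y"
    using assms(2) convex_hull_finite[OF V(1)] by auto
  define W where "W = {v\<in>V. 0 < u v}"
  have WV: "W \<subseteq> V" unfolding W_def by auto
  have z: "\<forall>v\<in>V - W. u v = 0" using u(1) unfolding W_def by force
  have s1: "sum u W = 1" using sum.mono_neutral_left[OF V(1) WV z] u(2) by simp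
  have s2: "(\<Sum>v\<in>W. u v *\<^sub>R v) = y"
    using sum.mono_neutral_left[OF V(1) WV, of "\<lambda>v. u v *\<^sub>R v"] z u(3) by simp
  have Wi: "\<not> affine_dependent W" using V(2) WV affine_dependent_subset by blast
  have "W \<noteq> {}" using s1 by auto
  have "y \<in> rel_interior (convex hull W)"
    unfolding rel_interior_convex_hull_explicit[OF Wi] using s1 s2 W_def by blast
  moreover have "convex hull W face_of \<sigma>"
    using face_of_convex_hull_affine_independent[OF V(2)] V(3) WV by blast
  moreover have "convex hull W \<noteq> {}" using \<open>W \<noteq> {}\<close> by simp
  ultimately show ?thesis using K_face[OF assms(1)] face_of_imp_subset by blast
qed

lemma ri_in: assumes "\<sigma> \<in> K" "\<tau> \<in> K" "y \<in> \<tau>" "y \<in> rel_interior \<sigma>"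
  shows "\<sigma> \<subseteq> \<tau>"
proof (rule ccontr)
  assume "\<not> \<sigma> \<subseteq> \<tau>"
  then have "\<sigma> \<inter> \<tau> \<noteq> \<sigma>" by blast
  then have "(\<sigma> \<inter> \<tau>) \<inter> rel_interior \<sigma> = {}"
    using face_of_disjoint_rel_interior K_inter_face assms(1,2) by blast
  then show False using assms(3,4) rel_interior_subset by blast
qed

lemma ri_disj: assumes "\<sigma> \<in> K" "\<tau> \<in> K" "y \<in> rel_interior \<tau>" "y \<in> rel_interior \<sigma>"
  shows "\<sigma> = \<tau>"
  using ri_in assms rel_interior_subset by (metis subset_antisym subsetD)

lemma seg_ri: assumes "\<sigma> \<in> K" "y \<in> \<sigma>" "b \<in> rel_interior \<sigma>" "0 < t" "t \<le> 1"
  shows "(1 - t) *\<^sub>R y + t *\<^sub>R b \<in> rel_interior \<sigma>"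
proof -
  have "y - t *\<^sub>R (y - b) \<in> rel_interior \<sigma>"
    using rel_interior_closure_convex_shrink[OF K_convex[OF assms(1)] assms(3) _ assms(4,5)]
      assms(2) closure_subset by blast
  moreover have "y - t *\<^sub>R (y - b) = (1 - t) *\<^sub>R y + t *\<^sub>R b" by (simp add: algebra_simps)
  ultimately show ?thesis by simp
qed

lemma seg_ri': assumes "\<sigma> \<in> K" "y \<in> \<sigma>" "b \<in> rel_interior \<sigma>" "0 \<le> t" "t < 1"
  shows "(1 - t) *\<^sub>R b + t *\<^sub>R y \<in> rel_interior \<sigma>"
proof -
  have "(1 - (1 - t)) *\<^sub>R y + (1 - t) *\<^sub>R b \<in> rel_interior \<sigma>"
    using seg_ri[OF assms(1,2,3), of "1 - t"] assms(4,5) by simp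
  moreover have "(1 - (1 - t)) *\<^sub>R y + (1 - t) *\<^sub>R b = (1 - t) *\<^sub>R b + t *\<^sub>R y"
    by (simp add: algebra_simps)
  ultimately show ?thesis by (simp add: add.commute)
qed

end


lemma pl_linepath: "piecewise_linear (linepath a b)"
  unfolding piecewise_linear_def
  by (rule exI[of _ "\<lambda>i. if i = 0 then 0 else 1"], rule exI[of _ 1])
     (auto simp: linepath_def algebra_simps)

lemma mono_upto:
  fixes r :: "nat \<Rightarrow> real"
  assumes "\<forall>i<k. r i < r (Suc i)" "j \<le> l" "l \<le> k" shows "r j \<le> r l"
  using assms(2,3)
proof (induction l)
  case 0 then show ?case by simp
next
  case (Suc l)
  show ?case
  proof (cases "j = Suc l")
    case False
    then have "r j \<le> r l" using Suc by simp
    also have "r l < r (Suc l)" using assms(1) Suc.prems by simp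
    finally show ?thesis by simp
  qed simp
qed

lemma join_low: "0 \<le> s \<Longrightarrow> s \<le> 1/2 \<Longrightarrow> (p +++ q) s = p (2 * s)"
  by (simp add: joinpaths_def)

lemma join_high: "p 1 = q 0 \<Longrightarrow> 1/2 \<le> s \<Longrightarrow> (p +++ q) s = q (2 * s - 1)"
proof (cases "s = 1/2")
  case True
  assume "p 1 = q 0"
  then show ?thesis unfolding True by (simp add: joinpaths_def)
qed (auto simp: joinpaths_def)

lemma pl_join:
  fixes p q :: "real \<Rightarrow> 'a::real_normed_vector"
  assumes "piecewise_linear p" "piecewise_linear q" "p 1 = q 0"
  shows "piecewise_linear (p +++ q)"
proof -
  obtain r k where r: "r 0 = 0" "r k = 1" "\<forall>i<k. r i < r (Suc i)"
    "\<forall>i<k. \<forall>t\<in>{0..1}. p (t * r i + (1 - t) * r (Suc i)) = t *\<^sub>R p (r i) + (1 - t) *\<^sub>R p (r (Suc i))"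
    using assms(1) unfolding piecewise_linear_def by blast
  obtain r' k' where r': "r' 0 = 0" "r' k' = 1" "\<forall>i<k'. r' i < r' (Suc i)"
    "\<forall>i<k'. \<forall>t\<in>{0..1}. q (t * r' i + (1 - t) * r' (Suc i)) = t *\<^sub>R q (r' i) + (1 - t) *\<^sub>R q (r' (Suc i))"
    using assms(2) unfolding piecewise_linear_def by blast
  have k: "k \<ge> 1" using r(1,2) by (cases k) auto
  have k': "k' \<ge> 1" using r'(1,2) by (cases k') auto
  define R where "R i = (if i < k then r i / 2 else (r' (i - k) + 1) / 2)" for i
  have Rlow: "R i = r i / 2" if "i \<le> k" for i
    using that r(2) r'(1) unfolding R_def by auto
  have Rlow2: "2 * R i = r i" if "i \<le> k" for i
    using Rlow[OF that] by simp
  have Rhigh: "R i = (r' (i - k) + 1) / 2" if "k \<le> i" for i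
    using that unfolding R_def by auto
  have Rhigh2: "2 * R i - 1 = r' (i - k)" if "k \<le> i" for i
    using Rhigh[OF that] by simp
  have rb: "0 \<le> r i \<and> r i \<le> 1" if "i \<le> k" for i
    using mono_upto[OF r(3), of 0 i] mono_upto[OF r(3), of i k] that r(1,2) by auto
  have rb': "0 \<le> r' i \<and> r' i \<le> 1" if "i \<le> k'" for i
    using mono_upto[OF r'(3), of 0 i] mono_upto[OF r'(3), of i k'] that r'(1,2) by auto
  show ?thesis unfolding piecewise_linear_def
  proof (intro exI conjI allI impI ballI)
    show "R 0 = 0" using Rlow[of 0] r(1) by simp
    show "R (k + k') = 1" using Rhigh[of "k + k'"] r'(2) by simp
  next
    fix i assume i: "i < k + k'"
    show "R i < R (Suc i)"
    proof (cases "i < k")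
      case True
      have "r i < r (Suc i)" using r(3) True by blast
      then show ?thesis using Rlow[of i] Rlow[of "Suc i"] True by simp
    next
      case False
      then have "Suc i - k = Suc (i - k)" "i - k < k'" using i by auto
      moreover have "r' (i - k) < r' (Suc (i - k))" using r'(3) \<open>i - k < k'\<close> by blast
      ultimately show ?thesis using Rhigh[of i] Rhigh[of "Suc i"] False by simp
    qed
  next
    fix i t assume i: "i < k + k'" and t: "t \<in> {0..(1::real)}"
    show "(p +++ q) (t * R i + (1 - t) * R (Suc i)) =
          t *\<^sub>R (p +++ q) (R i) + (1 - t) *\<^sub>R (p +++ q) (R (Suc i))"
    proof (cases "i < k")
      case True
      define s where "s = t * r i + (1 - t) * r (Suc i)"
      have e: "t * R i + (1 - t) * R (Suc i) = s / 2"
        using Rlow[of i] Rlow[of "Suc i"] True unfolding s_def by (simp add: field_simps)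
      have b1: "0 \<le> r i" "r i \<le> 1" "0 \<le> r (Suc i)" "r (Suc i) \<le> 1" using rb[of i] rb[of "Suc i"] True by auto
      have "0 \<le> s" "s \<le> 1" using t b1 unfolding s_def
        by (auto intro!: add_nonneg_nonneg mult_nonneg_nonneg convex_bound_le)
      then have "(p +++ q) (s / 2) = p s" by (subst join_low) auto
      moreover have "(p +++ q) (R i) = p (r i)" using Rlow[of i] True b1 by (subst join_low) (auto simp: Rlow2)
      moreover have "(p +++ q) (R (Suc i)) = p (r (Suc i))" using Rlow[of "Suc i"] True b1 by (subst join_low) (auto simp: Rlow2)
      ultimately show ?thesis unfolding e using r(4) True t by (simp add: s_def)
    next
      case False
      define j where "j = i - k"
      have j: "j < k'" "Suc i - k = Suc j" using i False unfolding j_def by auto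
      define s where "s = t * r' j + (1 - t) * r' (Suc j)"
      have e: "t * R i + (1 - t) * R (Suc i) = (s + 1) / 2"
        using Rhigh[of i] Rhigh[of "Suc i"] False j unfolding s_def j_def by (simp add: field_simps)
      have b1: "0 \<le> r' j" "r' j \<le> 1" "0 \<le> r' (Suc j)" "r' (Suc j) \<le> 1" using rb'[of j] rb'[of "Suc j"] j by auto
      have "0 \<le> s" using t b1 unfolding s_def
        by (auto intro!: add_nonneg_nonneg mult_nonneg_nonneg)
      then have "(p +++ q) ((s + 1) / 2) = q s" using assms(3) by (subst join_high) (auto simp: field_simps)
      moreover have "(p +++ q) (R i) = q (r' j)" using Rhigh[of i] False b1 assms(3) unfolding j_def
        by (subst join_high) (auto simp: Rhigh2)
      moreover have "(p +++ q) (R (Suc i)) = q (r' (Suc j))" using Rhigh[of "Suc i"] False b1 j assms(3)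
        by (subst join_high) (auto simp: Rhigh2)
      ultimately show ?thesis unfolding e using r'(4) j t by (simp add: s_def)
    qed
  qed
qed

definition good :: "'a::euclidean_space set \<Rightarrow> 'a set \<Rightarrow> 'a \<Rightarrow> 'a \<Rightarrow> bool" where
  "good P A p q \<longleftrightarrow> (\<exists>\<pi>. path_in P \<pi> \<and> piecewise_linear \<pi> \<and> \<pi> 0 = p \<and> \<pi> 1 = q \<and> \<pi> ` {0<..<1} \<subseteq> A)"

lemma good_seg:
  assumes "closed_segment p q \<subseteq> P" "\<And>t. 0 < t \<Longrightarrow> t < 1 \<Longrightarrow> (1 - t) *\<^sub>R p + t *\<^sub>R q \<in> A"
  shows "good P A p q"
  unfolding good_def
proof (intro exI conjI)
  show "path_in P (linepath p q)" unfolding path_in_def using assms(1) by simp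
  show "piecewise_linear (linepath p q)" by (rule pl_linepath)
  show "linepath p q ` {0<..<1} \<subseteq> A" using assms(2) by (auto simp: linepath_def)
qed (auto simp: linepath_def)

lemma good_join:
  assumes "good P A p q" "good P A q r" "q \<in> A"
  shows "good P A p r"
proof -
  obtain \<pi>1 where h1: "path_in P \<pi>1" "piecewise_linear \<pi>1" "\<pi>1 0 = p" "\<pi>1 1 = q" "\<pi>1 ` {0<..<1} \<subseteq> A"
    using assms(1) unfolding good_def by blast
  obtain \<pi>2 where h2: "path_in P \<pi>2" "piecewise_linear \<pi>2" "\<pi>2 0 = q" "\<pi>2 1 = r" "\<pi>2 ` {0<..<1} \<subseteq> A"
    using assms(2) unfolding good_def by blast
  have fs: "pathfinish \<pi>1 = pathstart \<pi>2" using h1 h2 by (simp add: pathfinish_def pathstart_def)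
  show ?thesis unfolding good_def
  proof (intro exI conjI)
    show "path_in P (\<pi>1 +++ \<pi>2)" using h1(1) h2(1) fs unfolding path_in_def
      by (metis path_image_join path_join_imp Un_least)
    show "piecewise_linear (\<pi>1 +++ \<pi>2)" using pl_join h1 h2 by metis
    show "(\<pi>1 +++ \<pi>2) 0 = p" using h1 by (simp add: joinpaths_def)
    show "(\<pi>1 +++ \<pi>2) 1 = r" using h2 by (simp add: joinpaths_def)
    show "(\<pi>1 +++ \<pi>2) ` {0<..<1} \<subseteq> A"
    proof
      fix y assume "y \<in> (\<pi>1 +++ \<pi>2) ` {0<..<1}"
      then obtain s where s: "0 < s" "s < 1" "y = (\<pi>1 +++ \<pi>2) s" by auto
      consider "s < 1/2" | "s = 1/2" | "s > 1/2" by linarith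
      then show "y \<in> A"
      proof cases
        case 1 then show ?thesis using s h1(5) by (auto simp: joinpaths_def)
      next
        case 2 then show ?thesis using s(3) h1(4) assms(3) unfolding 2 by (auto simp: joinpaths_def)
      next
        case 3 then show ?thesis using s h2(5) by (auto simp: joinpaths_def)
      qed
    qed
  qed
qed


context cx begin
definition sat :: "'a set \<Rightarrow> bool" where
  "sat A \<longleftrightarrow> A \<subseteq> \<Union>K \<and> (\<forall>\<sigma>\<in>K. rel_interior \<sigma> \<inter> A \<noteq> {} \<longrightarrow> rel_interior \<sigma> \<subseteq> A)"

lemma endpt:
  assumes "path_in (\<Union>K) \<pi>"
  shows "\<exists>\<sigma>\<in>K. \<pi> 0 \<in> \<sigma> \<and> (\<exists>t\<in>{0<..<1}. \<pi> t \<in> rel_interior \<sigma>)"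
proof -
  define C where "C = \<Union>{\<sigma>\<in>K. \<pi> 0 \<notin> \<sigma>}"
  have "closed C" unfolding C_def using finK K_closed by auto
  moreover have "\<pi> 0 \<notin> C" unfolding C_def by auto
  ultimately have "\<exists>e>0. ball (\<pi> 0) e \<subseteq> - C"
    using open_contains_ball_eq[of "- C" "\<pi> 0"] by (simp add: open_Compl)
  then obtain e where e: "e > 0" "ball (\<pi> 0) e \<subseteq> - C" by blast
  have cont: "continuous_on {0..1} \<pi>" and img: "\<pi> ` {0..1} \<subseteq> \<Union>K"
    using assms unfolding path_in_def path_def path_image_def by auto
  obtain d where d: "d > 0" "\<forall>x'\<in>{0..1}. dist x' 0 < d \<longrightarrow> dist (\<pi> x') (\<pi> 0) < e"
  proof -
    have "0 \<in> {0..1::real}" by simp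
    then show ?thesis using that cont e(1) unfolding continuous_on_iff by blast
  qed
  define t where "t = min d 1 / 2"
  have t: "t \<in> {0<..<1}" "t \<in> {0..1}" "dist t 0 < d" using d unfolding t_def by (auto simp: dist_real_def)
  then have "\<pi> t \<in> ball (\<pi> 0) e" using d by (auto simp: dist_commute)
  then have nC: "\<pi> t \<notin> C" using e by blast
  obtain \<sigma> where "\<sigma> \<in> K" "\<pi> t \<in> \<sigma>" using img t by blast
  then obtain \<rho> where \<rho>: "\<rho> \<in> K" "\<pi> t \<in> rel_interior \<rho>" using cover by blast
  have "\<pi> 0 \<in> \<rho>" using nC \<rho> rel_interior_subset unfolding C_def by blast
  then show ?thesis using \<rho> t by blast
qed
lemma mainL:
  assumes sA: "sat A" and pa: "path_in (\<Union>K) \<pi>" and YA: "\<pi> ` {0<..<1} \<subseteq> A" and B: "\<pi> 1 \<in> B"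
    and z: "\<forall>\<tau>\<in>K. \<pi> 0 \<in> \<tau> \<longrightarrow> z \<in> \<tau>"
  shows "\<exists>\<pi>'. path_in (\<Union>K) \<pi>' \<and> piecewise_linear \<pi>' \<and> \<pi>' 0 = z \<and> \<pi>' ` {0<..<1} \<subseteq> A \<and> \<pi>' 1 \<in> B"
proof -
  define P where "P = \<Union>K"
  define Y where "Y = \<pi> ` {0<..<1}"
  obtain \<sigma>0 t0 where s0: "\<sigma>0 \<in> K" "\<pi> 0 \<in> \<sigma>0" "t0 \<in> {0<..<1}" "\<pi> t0 \<in> rel_interior \<sigma>0"
    using endpt[OF pa] by blast
  have par: "path_in (\<Union>K) (reversepath \<pi>)" using pa unfolding path_in_def by simp
  obtain \<sigma>1 t1' where s1': "\<sigma>1 \<in> K" "reversepath \<pi> 0 \<in> \<sigma>1" "t1' \<in> {0<..<1}" "reversepath \<pi> t1' \<in> rel_interior \<sigma>1"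
    using endpt[OF par] by blast
  define t1 where "t1 = 1 - t1'"
  have s1: "\<pi> 1 \<in> \<sigma>1" "t1 \<in> {0<..<1}" "\<pi> t1 \<in> rel_interior \<sigma>1"
    using s1' unfolding t1_def reversepath_def by auto
  define F where "F = {\<sigma>\<in>K. rel_interior \<sigma> \<inter> Y \<noteq> {}}"
  have F0: "\<sigma>0 \<in> F" using s0 unfolding F_def Y_def by blast
  have F1: "\<sigma>1 \<in> F" using s1 s1'(1) unfolding F_def Y_def by blast
  have FA: "rel_interior \<sigma> \<subseteq> A" if "\<sigma> \<in> F" for \<sigma>
    using that sA YA unfolding F_def sat_def Y_def by blast
  have FK: "F \<subseteq> K" unfolding F_def by blast
  have Fne: "rel_interior \<sigma> \<noteq> {}" if "\<sigma> \<in> F" for \<sigma> using that unfolding F_def by blast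
  define R where "R = {(\<sigma>,\<tau>). \<sigma> \<in> F \<and> \<tau> \<in> F \<and> (\<sigma> \<subseteq> \<tau> \<or> \<tau> \<subseteq> \<sigma>)}"
  define G where "G = {\<tau>. (\<sigma>0, \<tau>) \<in> R\<^sup>*}"
  have GF: "G \<subseteq> F"
  proof
    fix \<tau> assume "\<tau> \<in> G"
    then have "(\<sigma>0, \<tau>) \<in> R\<^sup>*" unfolding G_def by blast
    then show "\<tau> \<in> F" using F0 by (cases rule: rtranclE) (auto simp: R_def)
  qed
  have YP: "Y \<subseteq> \<Union>K" using pa unfolding Y_def path_in_def path_image_def by auto
  have cellY: "\<exists>\<rho>\<in>F. w \<in> rel_interior \<rho>" if wY: "w \<in> Y" for w
  proof -
    obtain \<sigma> where "\<sigma> \<in> K" "w \<in> \<sigma>" using YP wY by blast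
    then obtain \<rho> where "\<rho> \<in> K" "w \<in> rel_interior \<rho>" using cover by blast
    then show ?thesis using wY unfolding F_def by blast
  qed
  have \<sigma>1G: "\<sigma>1 \<in> G"
  proof (rule ccontr)
    assume n1: "\<sigma>1 \<notin> G"
    define C1 where "C1 = \<Union>G"
    define C2 where "C2 = \<Union>(F - G)"
    have cY: "connected Y" unfolding Y_def
      by (rule connected_continuous_image) (use pa in \<open>auto simp: path_in_def path_def intro: continuous_on_subset\<close>)
    have cl1: "closed C1" unfolding C1_def using GF FK finK K_closed
      by (intro closed_Union) (auto intro: finite_subset)
    have cl2: "closed C2" unfolding C2_def using FK finK K_closed
      by (intro closed_Union) (auto intro: finite_subset)
    have cov: "Y \<subseteq> C1 \<union> C2"
    proof
      fix w assume "w \<in> Y"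
      then obtain \<rho> where "\<rho> \<in> F" "w \<in> rel_interior \<rho>" using cellY by blast
      then show "w \<in> C1 \<union> C2" unfolding C1_def C2_def using rel_interior_subset by blast
    qed
    have dis: "C1 \<inter> C2 \<inter> Y = {}"
    proof (rule ccontr)
      assume "C1 \<inter> C2 \<inter> Y \<noteq> {}"
      then obtain w \<tau>1 \<tau>2 where w: "w \<in> Y" "\<tau>1 \<in> G" "w \<in> \<tau>1" "\<tau>2 \<in> F" "\<tau>2 \<notin> G" "w \<in> \<tau>2"
        unfolding C1_def C2_def by blast
      obtain \<rho> where \<rho>: "\<rho> \<in> F" "w \<in> rel_interior \<rho>" using cellY w(1) by blast
      have \<tau>1F: "\<tau>1 \<in> F" using GF w(2) by blast
      have \<rho>K: "\<rho> \<in> K" and \<tau>1K: "\<tau>1 \<in> K" and \<tau>2K: "\<tau>2 \<in> K" using FK \<rho>(1) \<tau>1F w(4) by auto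
      have "\<rho> \<subseteq> \<tau>1" by (rule ri_in[OF \<rho>K \<tau>1K w(3) \<rho>(2)])
      then have r1: "(\<tau>1, \<rho>) \<in> R" using \<rho>(1) \<tau>1F unfolding R_def by auto
      have "(\<sigma>0, \<tau>1) \<in> R\<^sup>*" using w(2) unfolding G_def by simp
      then have r2: "(\<sigma>0, \<rho>) \<in> R\<^sup>*" using r1 by (rule rtrancl_into_rtrancl)
      have "\<rho> \<subseteq> \<tau>2" by (rule ri_in[OF \<rho>K \<tau>2K w(6) \<rho>(2)])
      then have "(\<rho>, \<tau>2) \<in> R" using \<rho>(1) w(4) unfolding R_def by auto
      with r2 have "(\<sigma>0, \<tau>2) \<in> R\<^sup>*" by (rule rtrancl_into_rtrancl)
      then have "\<tau>2 \<in> G" unfolding G_def by simp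
      then show False using w by blast
    qed
    have "C1 \<inter> Y \<noteq> {}"
    proof -
      have "\<sigma>0 \<in> G" unfolding G_def by simp
      then show ?thesis using s0 rel_interior_subset unfolding C1_def Y_def by blast
    qed
    then have "C2 \<inter> Y = {}" using connected_closedD[OF cY dis cov cl1 cl2] by blast
    moreover have "\<pi> t1 \<in> C2 \<inter> Y" using s1 F1 n1 rel_interior_subset unfolding C2_def Y_def by blast
    ultimately show False by blast
  qed
  have goodG: "\<forall>b\<in>rel_interior \<tau>. good P A z b" if "(\<sigma>0, \<tau>) \<in> R\<^sup>*" for \<tau>
    using that
  proof (induction rule: rtrancl_induct)
    case base
    show ?case
    proof
      fix b assume b: "b \<in> rel_interior \<sigma>0"
      have z0: "z \<in> \<sigma>0" using z s0 by blast
      show "good P A z b"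
      proof (rule good_seg)
        have "b \<in> \<sigma>0" using b rel_interior_subset by blast
        then have "closed_segment z b \<subseteq> \<sigma>0" by (rule closed_segment_subset[OF z0 _ K_convex[OF s0(1)]])
        then show "closed_segment z b \<subseteq> P" unfolding P_def using s0(1) by blast
        fix t :: real assume "0 < t" "t < 1"
        then show "(1 - t) *\<^sub>R z + t *\<^sub>R b \<in> A" using seg_ri[OF s0(1) z0 b] FA[OF F0] by auto
      qed
    qed
  next
    case (step \<tau> \<rho>)
    have \<tau>F: "\<tau> \<in> F" and \<rho>F: "\<rho> \<in> F" and adj: "\<tau> \<subseteq> \<rho> \<or> \<rho> \<subseteq> \<tau>" using step(2) unfolding R_def by auto
    have \<tau>K: "\<tau> \<in> K" and \<rho>K: "\<rho> \<in> K" using \<tau>F \<rho>F FK by auto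
    show ?case
    proof
      fix b' assume b': "b' \<in> rel_interior \<rho>"
      obtain b where b: "b \<in> rel_interior \<tau>" using Fne[OF \<tau>F] by blast
      have g1: "good P A z b" using step(3) b by blast
      have bA: "b \<in> A" using FA[OF \<tau>F] b by blast
      have g2: "good P A b b'"
      proof (cases "\<tau> \<subseteq> \<rho>")
        case True
        have bb: "b \<in> \<rho>" using True b rel_interior_subset by blast
        show ?thesis
        proof (rule good_seg)
          have "b' \<in> \<rho>" using b' rel_interior_subset by blast
          then have "closed_segment b b' \<subseteq> \<rho>" by (rule closed_segment_subset[OF bb _ K_convex[OF \<rho>K]])
          then show "closed_segment b b' \<subseteq> P" unfolding P_def using \<rho>K by blast
          fix t :: real assume "0 < t" "t < 1"
          then show "(1 - t) *\<^sub>R b + t *\<^sub>R b' \<in> A" using seg_ri[OF \<rho>K bb b', of t] FA[OF \<rho>F] by auto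
        qed
      next
        case False
        then have sub: "\<rho> \<subseteq> \<tau>" using adj by blast
        have bb: "b' \<in> \<tau>" using sub b' rel_interior_subset by blast
        show ?thesis
        proof (rule good_seg)
          have "b \<in> \<tau>" using b rel_interior_subset by blast
          then have "closed_segment b b' \<subseteq> \<tau>" by (rule closed_segment_subset[OF _ bb K_convex[OF \<tau>K]])
          then show "closed_segment b b' \<subseteq> P" unfolding P_def using \<tau>K by blast
          fix t :: real assume t: "0 < t" "t < 1"
          have "(1 - t) *\<^sub>R b + t *\<^sub>R b' \<in> rel_interior \<tau>"
            using seg_ri'[OF \<tau>K bb b, of t] t by simp
          then show "(1 - t) *\<^sub>R b + t *\<^sub>R b' \<in> A" using FA[OF \<tau>F] by blast
        qed
      qed
      show "good P A z b'" using good_join[OF g1 g2 bA] .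
    qed
  qed
  obtain b1 where b1: "b1 \<in> rel_interior \<sigma>1" using Fne[OF F1] by blast
  have "(\<sigma>0, \<sigma>1) \<in> R\<^sup>*" using \<sigma>1G unfolding G_def by simp
  then have g1: "good P A z b1" using goodG b1 by blast
  have b1A: "b1 \<in> A" using FA[OF F1] b1 by blast
  have g2: "good P A b1 (\<pi> 1)"
  proof (rule good_seg)
    have "b1 \<in> \<sigma>1" using b1 rel_interior_subset by blast
    then have "closed_segment b1 (\<pi> 1) \<subseteq> \<sigma>1" by (rule closed_segment_subset[OF _ s1(1) K_convex[OF s1'(1)]])
    then show "closed_segment b1 (\<pi> 1) \<subseteq> P" unfolding P_def using s1'(1) by blast
    fix t :: real assume t: "0 < t" "t < 1"
    have "(1 - t) *\<^sub>R b1 + t *\<^sub>R \<pi> 1 \<in> rel_interior \<sigma>1"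
      using seg_ri'[OF s1'(1) s1(1) b1, of t] t by simp
    then show "(1 - t) *\<^sub>R b1 + t *\<^sub>R \<pi> 1 \<in> A" using FA[OF F1] by blast
  qed
  have "good P A z (\<pi> 1)" using good_join[OF g1 g2 b1A] .
  then obtain \<pi>' where h: "path_in P \<pi>'" "piecewise_linear \<pi>'" "\<pi>' 0 = z" "\<pi>' 1 = \<pi> 1"
      "\<pi>' ` {0<..<1} \<subseteq> A" unfolding good_def by blast
  show ?thesis
    by (rule exI[of _ \<pi>']) (use h B in \<open>auto simp: P_def\<close>)
qed

end


context cx begin

lemma sat_sem:
  assumes V: "\<forall>p. \<exists>C. C \<subseteq> cells K \<and> V p = \<Union>C"
  shows "sat (sem (\<Union>K) V \<phi>)"
proof (induction \<phi>)
  case Top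
  show ?case unfolding sat_def using rel_interior_subset by auto
next
  case (Atom p)
  obtain C where C: "C \<subseteq> cells K" "V p = \<Union>C" using V by blast
  show ?case unfolding sat_def
  proof (intro conjI ballI impI)
    show "sem (\<Union>K) V (Atom p) \<subseteq> \<Union>K" by auto
  next
    fix \<sigma> assume \<sigma>: "\<sigma> \<in> K" "rel_interior \<sigma> \<inter> sem (\<Union>K) V (Atom p) \<noteq> {}"
    then obtain w c where w: "w \<in> rel_interior \<sigma>" "c \<in> C" "w \<in> c" using C by auto
    then obtain \<tau> where \<tau>: "\<tau> \<in> K" "c = rel_interior \<tau>" using C(1) cells_eq by auto
    have "\<sigma> = \<tau>" using ri_disj[OF \<sigma>(1) \<tau>(1)] w \<tau> by blast
    then have "rel_interior \<sigma> \<subseteq> V p" using C(2) w(2) \<tau>(2) by blast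
    moreover have "rel_interior \<sigma> \<subseteq> \<Union>K" using \<sigma>(1) rel_interior_subset by blast
    ultimately show "rel_interior \<sigma> \<subseteq> sem (\<Union>K) V (Atom p)" by auto
  qed
next
  case (Neg \<phi>)
  then show ?case unfolding sat_def using rel_interior_subset by fastforce
next
  case (Conj \<phi>1 \<phi>2)
  then show ?case unfolding sat_def by (simp add: Int_assoc) blast
next
  case (Box \<phi>)
  define P where "P = \<Union>K"
  define A where "A = sem P V \<phi>"
  have sA: "sat A" using Box unfolding A_def P_def .
  have S: "sem P V (Box \<phi>) = (top_of_set P) interior_of A" unfolding A_def by simp
  have SP: "(top_of_set P) interior_of A \<subseteq> P"
    using interior_of_subset_topspace[of "top_of_set P" A] by simp
  show ?case unfolding P_def[symmetric] S sat_def
  proof (intro conjI ballI impI)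
    show "top_of_set P interior_of A \<subseteq> P" by (rule SP)
  next
    fix \<sigma> assume \<sigma>: "\<sigma> \<in> K" "rel_interior \<sigma> \<inter> top_of_set P interior_of A \<noteq> {}"
    then obtain y where y: "y \<in> rel_interior \<sigma>" "y \<in> top_of_set P interior_of A" by blast
    then obtain U where U: "openin (top_of_set P) U" "y \<in> U" "U \<subseteq> A"
      unfolding interior_of_def by blast
    obtain T where T: "open T" "U = P \<inter> T" using U(1) openin_open by blast
    define star where "star = \<Union>{rel_interior \<tau> | \<tau>. \<tau> \<in> K \<and> \<sigma> \<subseteq> \<tau>}"
    define Q where "Q = \<Union>{\<tau>\<in>K. \<not> \<sigma> \<subseteq> \<tau>}"
    have starQ: "star = P - Q"
    proof
      show "star \<subseteq> P - Q"
      proof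
        fix w assume "w \<in> star"
        then obtain \<tau> where \<tau>: "\<tau> \<in> K" "\<sigma> \<subseteq> \<tau>" "w \<in> rel_interior \<tau>" unfolding star_def by blast
        have "w \<in> P" using \<tau> rel_interior_subset unfolding P_def by blast
        moreover have "w \<notin> Q"
        proof
          assume "w \<in> Q"
          then obtain \<tau>' where \<tau>': "\<tau>' \<in> K" "\<not> \<sigma> \<subseteq> \<tau>'" "w \<in> \<tau>'" unfolding Q_def by blast
          have "\<tau> \<subseteq> \<tau>'" by (rule ri_in[OF \<tau>(1) \<tau>'(1) \<tau>'(3) \<tau>(3)])
          then show False using \<tau>(2) \<tau>'(2) by blast
        qed
        ultimately show "w \<in> P - Q" by blast
      qed
    next
      show "P - Q \<subseteq> star"
      proof
        fix w assume w: "w \<in> P - Q"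
        then obtain \<tau>0 where "\<tau>0 \<in> K" "w \<in> \<tau>0" unfolding P_def by blast
        then obtain \<rho> where \<rho>: "\<rho> \<in> K" "w \<in> rel_interior \<rho>" using cover by blast
        have "w \<in> \<rho>" using \<rho> rel_interior_subset by blast
        then have "\<sigma> \<subseteq> \<rho>" using w \<rho>(1) unfolding Q_def by blast
        then show "w \<in> star" unfolding star_def using \<rho> by blast
      qed
    qed
    have "closed Q" unfolding Q_def using finK K_closed by auto
    moreover have "Q \<subseteq> P" unfolding Q_def P_def by blast
    ultimately have "closedin (top_of_set P) Q" using closed_subset by blast
    then have ostar: "openin (top_of_set P) star" unfolding starQ
      by (intro openin_diff) (auto simp: openin_subtopology_self)
    have starA: "star \<subseteq> A"
    proof
      fix w assume "w \<in> star"
      then obtain \<tau> where \<tau>: "\<tau> \<in> K" "\<sigma> \<subseteq> \<tau>" "w \<in> rel_interior \<tau>" unfolding star_def by blast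
      have "y \<in> \<tau>" using y(1) rel_interior_subset \<tau>(2) by blast
      then have "y \<in> closure (rel_interior \<tau>)"
        using convex_closure_rel_interior[OF K_convex[OF \<tau>(1)]] closure_closed[OF K_closed[OF \<tau>(1)]]
        by simp
      moreover have "y \<in> T" using U(2) T(2) by blast
      ultimately have "T \<inter> closure (rel_interior \<tau>) \<noteq> {}" by blast
      then have "T \<inter> rel_interior \<tau> \<noteq> {}" using open_Int_closure_eq_empty[OF T(1)] by blast
      then obtain u where u: "u \<in> T" "u \<in> rel_interior \<tau>" by blast
      have "u \<in> P" using u(2) \<tau>(1) rel_interior_subset unfolding P_def by blast
      then have "u \<in> A" using u(1) T(2) U(3) by blast
      then have "rel_interior \<tau> \<subseteq> A" using sA \<tau>(1) u(2) unfolding sat_def by blast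
      then show "w \<in> A" using \<tau>(3) by blast
    qed
    have "rel_interior \<sigma> \<subseteq> star" unfolding star_def using \<sigma>(1) by blast
    then show "rel_interior \<sigma> \<subseteq> top_of_set P interior_of A"
      using ostar starA unfolding interior_of_def by blast
  qed
next
  case (Gamma \<phi> \<psi>)
  define P where "P = \<Union>K"
  have sA: "sat (sem P V \<phi>)" using Gamma unfolding P_def by simp
  show ?case unfolding P_def[symmetric] sat_def
  proof (intro conjI ballI impI)
    show "sem P V (Gamma \<phi> \<psi>) \<subseteq> P" by auto
  next
    fix \<sigma> assume \<sigma>: "\<sigma> \<in> K" "rel_interior \<sigma> \<inter> sem P V (Gamma \<phi> \<psi>) \<noteq> {}"
    then obtain y \<pi> where y: "y \<in> rel_interior \<sigma>" "path_in P \<pi>" "\<pi> 0 = y"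
      "\<pi> ` {0<..<1} \<subseteq> sem P V \<phi>" "\<pi> 1 \<in> sem P V \<psi>" by auto
    show "rel_interior \<sigma> \<subseteq> sem P V (Gamma \<phi> \<psi>)"
    proof
      fix z assume z: "z \<in> rel_interior \<sigma>"
      have zt: "\<forall>\<tau>\<in>K. \<pi> 0 \<in> \<tau> \<longrightarrow> z \<in> \<tau>"
      proof (intro ballI impI)
        fix \<tau> assume "\<tau> \<in> K" "\<pi> 0 \<in> \<tau>"
        then have "\<sigma> \<subseteq> \<tau>" using ri_in[OF \<sigma>(1) \<open>\<tau> \<in> K\<close>, of y] y(1,3) by blast
        then show "z \<in> \<tau>" using z rel_interior_subset by blast
      qed
      obtain \<pi>' where h: "path_in P \<pi>'" "\<pi>' 0 = z" "\<pi>' ` {0<..<1} \<subseteq> sem P V \<phi>" "\<pi>' 1 \<in> sem P V \<psi>"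
        using mainL[OF sA[unfolded P_def] y(2)[unfolded P_def] y(4)[unfolded P_def] y(5) zt] unfolding P_def by blast
      have "z \<in> P" using z \<sigma>(1) rel_interior_subset unfolding P_def by blast
      then show "z \<in> sem P V (Gamma \<phi> \<psi>)" using h by auto
    qed
  qed
qed

end

theorem mainTheorem6:
  fixes P :: "'a::euclidean_space set" and K :: "'a set set" and V :: "'p::finite \<Rightarrow> 'a set"
    and x :: 'a and \<phi> \<psi> :: "'p slcs"
  assumes "polyhedral_model P K V" and "x \<in> P"
  shows "models P K V x (Gamma \<phi> \<psi>) \<longleftrightarrow>
    (\<exists>\<pi>. path_in P \<pi> \<and> piecewise_linear \<pi> \<and> \<pi> 0 = x \<and>
         \<pi> ` {0<..<1} \<subseteq> sem P V \<phi> \<and> \<pi> 1 \<in> sem P V \<psi>)"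
proof -
  have sc: "simplicial_complex K" and PK: "P = \<Union>K" and V: "\<forall>p. \<exists>C. C \<subseteq> cells K \<and> V p = \<Union>C"
    using assms(1) unfolding polyhedral_model_def by auto
  interpret cx K by (rule cx.intro[OF sc])
  show ?thesis
  proof
    assume "models P K V x (Gamma \<phi> \<psi>)"
    then obtain \<pi> where \<pi>: "path_in P \<pi>" "\<pi> 0 = x" "\<pi> ` {0<..<1} \<subseteq> sem P V \<phi>" "\<pi> 1 \<in> sem P V \<psi>"
      unfolding models_def by auto
    have sA: "sat (sem P V \<phi>)" using sat_sem[OF V] PK by simp
    have zt: "\<forall>\<tau>\<in>K. \<pi> 0 \<in> \<tau> \<longrightarrow> x \<in> \<tau>" using \<pi>(2) by blast
    show "\<exists>\<pi>. path_in P \<pi> \<and> piecewise_linear \<pi> \<and> \<pi> 0 = x \<and>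
         \<pi> ` {0<..<1} \<subseteq> sem P V \<phi> \<and> \<pi> 1 \<in> sem P V \<psi>"
      using mainL[OF sA[unfolded PK] \<pi>(1)[unfolded PK] \<pi>(3)[unfolded PK] \<pi>(4) zt] PK by blast
  next
    assume "\<exists>\<pi>. path_in P \<pi> \<and> piecewise_linear \<pi> \<and> \<pi> 0 = x \<and>
         \<pi> ` {0<..<1} \<subseteq> sem P V \<phi> \<and> \<pi> 1 \<in> sem P V \<psi>"
    then show "models P K V x (Gamma \<phi> \<psi>)" unfolding models_def using assms(2) by auto
  qed
qed

end
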